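(* Let $\mathcal{P}$ be a collection of cells and let $[a,b]$ and $[\alpha,\beta]$ be two inner intervals of $\mathcal{P}$, where $c,d$ are the anti-diagonal corners of $[a,b]$ and $\gamma,\delta$ are the anti-diagonal corners of $[\alpha,\beta]$. Suppose $|\{a,b,c,d\}\cap\{\alpha,\beta,\gamma,\delta\}|=2$. Then for every $\mathsf{P}$-order $<^{\mathsf{P}}$ on $V(\mathcal{P})$, the $S$-polynomial $S(f_{a,b},f_{\alpha,\beta})$ reduces to $0$ modulo $\mathcal{G}$ with respect to $<^{\mathsf{P}}_{\mathrm{lex}}$.
   Context: For $a=(i,j), b=(k,l)\in\mathbb{Z}^2$ with $a\le b$ componentwise, the interval $[a,b]=\{(m,n)\in\mathbb{Z}^2: i\le m\le k,\ j\le n\le l\}$; it is proper if $i<k$ and $j<l$, in which case $a,b$ are its diagonal corners and $c=(i,l)$ (upper left), $d=(k,j)$ (lower right) its anti-diagonal corners. A cell is a proper interval $[v,v+(1,1)]$; its vertices are its four corners. A collection of cells $\mathcal{P}$ is a nonempty finite set of cells; $V(\mathcal{P})$ is the set of all vertices of its cells. A proper interval $[a,b]$ is an inner interval of $\mathcal{P}$ if every cell $[v,v+(1,1)]\subseteq[a,b]$ belongs to $\mathcal{P}$. Let $K$ be a field and $S=K[x_v: v\in V(\mathcal{P})]$. For an inner interval $[a,b]$ with anti-diagonal corners $c$ (upper left), $d$ (lower right), put $f_{a,b}=x_ax_b-x_cx_d$ (an inner 2-minor); $\mathcal{G}$ is the set of all inner 2-minors of $\mathcal{P}$. A $\mathsf{P}$-order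 is a total order $<^{\mathsf{P}}$ on $V(\mathcal{P})$; $<^{\mathsf{P}}_{\mathrm{lex}}$ denotes the lexicographic monomial order on $S$ induced by the variable order $x_u<x_v \iff u<^{\mathsf{P}}v$. $S(f,g)$ denotes the $S$-polynomial with respect to this order. *)

theory Defs
  imports Main "HOL-Library.Poly_Mapping"
begin

type_synonym point = "int \<times> int"
type_synonym monomial = "point \<Rightarrow>\<^sub>0 nat"
type_synonym 'k mpoly = "monomial \<Rightarrow>\<^sub>0 'k"

text \<open>A cell [v, v+(1,1)] is represented by its lower-left corner v;
  a collection of cells is thus a set of points.\<close>

definition cell_vertices :: "point \<Rightarrow> point set" where
  "cell_vertices v = {v, (fst v + 1, snd v), (fst v, snd v + 1), (fst v + 1, snd v + 1)}"

definition is_collection_of_cells :: "point set \<Rightarrow> bool" where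
  "is_collection_of_cells P \<longleftrightarrow> finite P \<and> P \<noteq> {}"

definition vertex_set :: "point set \<Rightarrow> point set" where
  "vertex_set P = (\<Union>v\<in>P. cell_vertices v)"

definition inner_interval :: "point set \<Rightarrow> point \<Rightarrow> point \<Rightarrow> bool" where
  "inner_interval P a b \<longleftrightarrow> fst a < fst b \<and> snd a < snd b \<and>
     (\<forall>v. fst a \<le> fst v \<and> fst v + 1 \<le> fst b \<and> snd a \<le> snd v \<and> snd v + 1 \<le> snd b \<longrightarrow> v \<in> P)"

definition ul_corner :: "point \<Rightarrow> point \<Rightarrow> point" where
  "ul_corner a b = (fst a, snd b)"

definition lr_corner :: "point \<Rightarrow> point \<Rightarrow> point" where
  "lr_corner a b = (fst b, snd a)"

definition var :: "point \<Rightarrow> 'k::field mpoly" where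
  "var v = Poly_Mapping.single (Poly_Mapping.single v 1) 1"

definition inner_minor :: "point \<Rightarrow> point \<Rightarrow> 'k::field mpoly" where
  "inner_minor a b = var a * var b - var (ul_corner a b) * var (lr_corner a b)"

definition inner_minors :: "point set \<Rightarrow> 'k::field mpoly set" where
  "inner_minors P = {inner_minor a b | a b. inner_interval P a b}"

text \<open>Lexicographic monomial order induced by a strict variable order r
  ((u,v) \<in> r means x_u < x_v): s < t iff at the largest variable where the
  exponents differ, t has the larger exponent.\<close>
definition lex_less :: "point rel \<Rightarrow> monomial \<Rightarrow> monomial \<Rightarrow> bool" where
  "lex_less r s t \<longleftrightarrow> (\<exists>v. Poly_Mapping.lookup s v < Poly_Mapping.lookup t v \<and>
      (\<forall>u. (v, u) \<in> r \<longrightarrow> Poly_Mapping.lookup s u = Poly_Mapping.lookup t u))"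

definition lead_mon :: "point rel \<Rightarrow> 'k::field mpoly \<Rightarrow> monomial" where
  "lead_mon r p = (THE m. m \<in> Poly_Mapping.keys p \<and> (\<forall>m'\<in>Poly_Mapping.keys p. m' \<noteq> m \<longrightarrow> lex_less r m' m))"

definition lead_coeff_mp :: "point rel \<Rightarrow> 'k::field mpoly \<Rightarrow> 'k" where
  "lead_coeff_mp r p = Poly_Mapping.lookup p (lead_mon r p)"

definition mon_dvd :: "monomial \<Rightarrow> monomial \<Rightarrow> bool" where
  "mon_dvd s t \<longleftrightarrow> (\<forall>v. Poly_Mapping.lookup s v \<le> Poly_Mapping.lookup t v)"

definition mon_lcm :: "monomial \<Rightarrow> monomial \<Rightarrow> monomial" where
  "mon_lcm s t = s + (t - s)"

definition monom_term :: "monomial \<Rightarrow> 'k::field \<Rightarrow> 'k mpoly" where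
  "monom_term m c = Poly_Mapping.single m c"

definition spoly :: "point rel \<Rightarrow> 'k::field mpoly \<Rightarrow> 'k mpoly \<Rightarrow> 'k mpoly" where
  "spoly r f g =
     (let L = mon_lcm (lead_mon r f) (lead_mon r g) in
      monom_term (L - lead_mon r f) (1 / lead_coeff_mp r f) * f
      - monom_term (L - lead_mon r g) (1 / lead_coeff_mp r g) * g)"

definition red_step :: "point rel \<Rightarrow> 'k::field mpoly set \<Rightarrow> 'k mpoly \<Rightarrow> 'k mpoly \<Rightarrow> bool" where
  "red_step r G p q \<longleftrightarrow> (\<exists>g\<in>G. \<exists>t\<in>Poly_Mapping.keys p. g \<noteq> 0 \<and> mon_dvd (lead_mon r g) t \<and>
      q = p - monom_term (t - lead_mon r g) (Poly_Mapping.lookup p t / lead_coeff_mp r g) * g)"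

definition reduces_to_zero :: "point rel \<Rightarrow> 'k::field mpoly set \<Rightarrow> 'k mpoly \<Rightarrow> bool" where
  "reduces_to_zero r G p \<longleftrightarrow> (red_step r G)\<^sup>*\<^sup>* p 0"

end

theory Submission
  imports Defs
begin



abbreviation S :: "point \<Rightarrow> monomial" where "S v \<equiv> Poly_Mapping.single v 1"

definition bin :: "monomial \<Rightarrow> monomial \<Rightarrow> 'k::field mpoly" where
  "bin A B = Poly_Mapping.single A 1 - Poly_Mapping.single B 1"

definition LD :: "point rel \<Rightarrow> 'k::field mpoly \<Rightarrow> monomial \<Rightarrow> monomial \<Rightarrow> bool" where
  "LD r f F F' \<longleftrightarrow> F \<noteq> F' \<and> lead_mon r f = F \<and>
     ((f = bin F F' \<and> lead_coeff_mp r f = 1) \<or> (f = bin F' F \<and> lead_coeff_mp r f = -1))"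

lemma lookup_bin: "Poly_Mapping.lookup (bin A B :: 'k::field mpoly) m =
   (if m = A then 1 else 0) - (if m = B then 1 else 0)"
  by (simp add: bin_def lookup_minus lookup_single when_def)

lemma keys_bin: "A \<noteq> B \<Longrightarrow> Poly_Mapping.keys (bin A B :: 'k::field mpoly) = {A, B}"
  by (auto simp: in_keys_iff lookup_bin split: if_splits)

lemma bin_self[simp]: "bin A A = 0" by (simp add: bin_def)

lemma bin_neq0: "A \<noteq> B \<Longrightarrow> (bin A B :: 'k::field mpoly) \<noteq> 0"
proof
  assume "A \<noteq> B" "(bin A B :: 'k::field mpoly) = 0"
  then have "Poly_Mapping.lookup (bin A B :: 'k::field mpoly) A = 0" by simp
  with \<open>A \<noteq> B\<close> show False by (simp add: lookup_bin)
qed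

lemma mult_LD:
  assumes "LD r h H H'"
  shows "monom_term M (c / lead_coeff_mp r h) * h =
         Poly_Mapping.single (M + H) c - Poly_Mapping.single (M + H') c"
  using assms unfolding LD_def
  apply (elim conjE disjE)
   apply (simp add: monom_term_def bin_def right_diff_distrib mult_single)
  apply (simp add: monom_term_def bin_def right_diff_distrib mult_single single_uminus)
  done

lemma mon_dvd_diff_add: assumes "mon_dvd H M" shows "M - H + H = M"
proof (rule poly_mapping_eqI)
  fix k have "Poly_Mapping.lookup H k \<le> Poly_Mapping.lookup M k" using assms by (cases k) (simp add: mon_dvd_def)
  then show "Poly_Mapping.lookup (M - H + H) k = Poly_Mapping.lookup M k" by (simp add: lookup_add lookup_minus)
qed

lemma red1:
  assumes "h \<in> G" "LD r h H H'" "mon_dvd H M1" "M1 \<noteq> M2"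
  shows "red_step r G (bin M1 M2 :: 'k::field mpoly) (bin (M1 - H + H') M2)"
proof -
  have hn: "h \<noteq> 0" using assms(2) bin_neq0 unfolding LD_def by metis
  have k: "M1 \<in> Poly_Mapping.keys (bin M1 M2 :: 'k mpoly)" using keys_bin[OF assms(4)] by auto
  have lk: "Poly_Mapping.lookup (bin M1 M2 :: 'k mpoly) M1 = 1" using assms(4) by (simp add: lookup_bin)
  have "bin (M1 - H + H') M2 = bin M1 M2 - monom_term (M1 - lead_mon r h) (Poly_Mapping.lookup (bin M1 M2 :: 'k mpoly) M1 / lead_coeff_mp r h) * h"
    unfolding lk mult_LD[OF assms(2)] using assms(2,3)
    by (simp add: LD_def bin_def mon_dvd_diff_add)
  then show ?thesis unfolding red_step_def using assms(1,2,3) hn k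
    by (auto simp: LD_def)
qed

lemma red2:
  assumes "h \<in> G" "LD r h H H'" "mon_dvd H M2" "M1 \<noteq> M2"
  shows "red_step r G (bin M1 M2 :: 'k::field mpoly) (bin M1 (M2 - H + H'))"
proof -
  have hn: "h \<noteq> 0" using assms(2) bin_neq0 unfolding LD_def by metis
  have k: "M2 \<in> Poly_Mapping.keys (bin M1 M2 :: 'k mpoly)" using keys_bin[OF assms(4)] by auto
  have lk: "Poly_Mapping.lookup (bin M1 M2 :: 'k mpoly) M2 = -1" using assms(4) by (simp add: lookup_bin)
  have "bin M1 (M2 - H + H') = bin M1 M2 - monom_term (M2 - lead_mon r h) (Poly_Mapping.lookup (bin M1 M2 :: 'k mpoly) M2 / lead_coeff_mp r h) * h"
    unfolding lk mult_LD[OF assms(2)] using assms(2,3)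
    by (simp add: LD_def bin_def mon_dvd_diff_add single_uminus)
  then show ?thesis unfolding red_step_def using assms(1,2,3) hn k
    by (auto simp: LD_def)
qed


lemma spoly_LD:
  assumes "LD r f F F'" "LD r g G G'"
  shows "spoly r f g = bin (mon_lcm F G - G + G') (mon_lcm F G - F + F')"
proof -
  define L where "L = mon_lcm F G"
  have d1: "mon_dvd F L" "mon_dvd G L"
    by (auto simp: L_def mon_dvd_def mon_lcm_def lookup_add lookup_minus)
  have lf: "lead_mon r f = F" "lead_mon r g = G" using assms by (auto simp: LD_def)
  have e1: "monom_term (L - F) (1 / lead_coeff_mp r f) * f = Poly_Mapping.single L 1 - Poly_Mapping.single (L - F + F') 1"
    using mult_LD[OF assms(1), of "L - F" 1] mon_dvd_diff_add[OF d1(1)] by simp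
  have e2: "monom_term (L - G) (1 / lead_coeff_mp r g) * g = Poly_Mapping.single L 1 - Poly_Mapping.single (L - G + G') 1"
    using mult_LD[OF assms(2), of "L - G" 1] mon_dvd_diff_add[OF d1(2)] by simp
  show ?thesis unfolding spoly_def Let_def lf L_def[symmetric] e1 e2 bin_def by simp
qed




lemma LD_of_lex:
  assumes "A \<noteq> B" "lex_less r B A" "\<not> lex_less r A B" "f = bin A B \<or> f = bin B A"
  shows "LD r (f :: 'k::field mpoly) A B"
proof -
  have ks: "Poly_Mapping.keys f = {A, B}" using assms(1,4) keys_bin[OF assms(1)] keys_bin[of B A] by auto
  have lm: "lead_mon r f = A" unfolding lead_mon_def ks
    by (rule the_equality) (use assms(2,3) in auto)
  show ?thesis using assms(1,4) unfolding LD_def lm lead_coeff_mp_def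
    by (auto simp: lookup_bin)
qed

definition mm :: "point \<Rightarrow> point \<Rightarrow> monomial" where "mm x y = S x + S y"

lemma lookup_mm: "Poly_Mapping.lookup (mm x y) v = (if x = v then 1 else 0) + (if y = v then 1 else 0)"
  by (simp add: mm_def lookup_add lookup_single when_def)

lemma max_exists:
  assumes "finite X" "X \<noteq> {}" "X \<subseteq> V" "strict_linear_order_on V r"
  shows "\<exists>m\<in>X. \<forall>u\<in>X. u \<noteq> m \<longrightarrow> (u, m) \<in> r"
  using assms(1,2,3)
proof (induction X rule: finite_ne_induct)
  case (singleton x) then show ?case by auto
next
  case (insert x X)
  then obtain m where m: "m \<in> X" "\<forall>u\<in>X. u \<noteq> m \<longrightarrow> (u, m) \<in> r" by auto
  have tr: "trans r" and tot: "total_on V r" using assms(4) by (auto simp: strict_linear_order_on_def)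
  have "x \<in> V" "m \<in> V" using insert m by auto
  show ?case
  proof (cases "(m, x) \<in> r")
    case True
    then show ?thesis using m tr by (auto dest: transD intro!: bexI[of _ x])
  next
    case False
    then have "x = m \<or> (x, m) \<in> r" using tot \<open>x \<in> V\<close> \<open>m \<in> V\<close> by (auto simp: total_on_def)
    then show ?thesis using m by auto
  qed
qed

lemma lex_mm:
  assumes slo: "strict_linear_order_on V r" and rV: "r \<subseteq> V \<times> V"
    and dist: "distinct [w, x, y, z]" and inV: "{w, x, y, z} \<subseteq> V"
    and m: "m \<in> {w, x}" "\<forall>u\<in>{w,x,y,z}. u \<noteq> m \<longrightarrow> (u, m) \<in> r"
  shows "lex_less r (mm y z) (mm w x) \<and> \<not> lex_less r (mm w x) (mm y z)"
proof -
  have tr: "trans r" and irr: "irrefl r" and tot: "total_on V r" using slo by (auto simp: strict_linear_order_on_def)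
  have above: "u \<notin> {w,x,y,z}" if "(m, u) \<in> r" for u
  proof
    assume u: "u \<in> {w,x,y,z}"
    have "u \<noteq> m" using that irreflD[OF irr, of m] by blast
    then have "(u, m) \<in> r" using m(2) u by auto
    then have "(m, m) \<in> r" using that tr by (auto dest: transD)
    then show False using irreflD[OF irr, of m] by blast
  qed
  have l1: "lex_less r (mm y z) (mm w x)" unfolding lex_less_def
    apply (rule exI[of _ m])
    using m(1) dist above by (auto simp: lookup_mm)
  have l2: "\<not> lex_less r (mm w x) (mm y z)"
  proof
    assume "lex_less r (mm w x) (mm y z)"
    then obtain v where v: "Poly_Mapping.lookup (mm w x) v < Poly_Mapping.lookup (mm y z) v"
      "\<forall>u. (v, u) \<in> r \<longrightarrow> Poly_Mapping.lookup (mm w x) u = Poly_Mapping.lookup (mm y z) u"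
      unfolding lex_less_def by blast
    have vyz: "v \<in> {y, z}" using v(1) by (auto simp: lookup_mm split: if_splits)
    have "v \<noteq> m" using vyz m(1) dist by auto
    moreover have "v \<in> V" "m \<in> V" using vyz m(1) inV by auto
    ultimately have "(v, m) \<in> r \<or> (m, v) \<in> r" using tot by (auto simp: total_on_def)
    then show False
    proof
      assume "(v, m) \<in> r"
      then have "Poly_Mapping.lookup (mm w x) m = Poly_Mapping.lookup (mm y z) m" using v(2) by blast
      then show False using m(1) dist by (auto simp: lookup_mm)
    next
      assume "(m, v) \<in> r" then show False using above vyz by auto
    qed
  qed
  show ?thesis using l1 l2 by blast
qed

lemma mm_neq: "distinct [w, x, y, z] \<Longrightarrow> mm w x \<noteq> mm y z"
proof
  assume "distinct [w, x, y, z]" "mm w x = mm y z"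
  then have "Poly_Mapping.lookup (mm w x) w = Poly_Mapping.lookup (mm y z) w" by simp
  with \<open>distinct [w, x, y, z]\<close> show False by (auto simp: lookup_mm split: if_splits)
qed

lemma lead_bo:
  assumes slo: "strict_linear_order_on V r" and rV: "r \<subseteq> V \<times> V"
    and dist: "distinct [w, x, y, z]" and inV: "{w, x, y, z} \<subseteq> V"
    and f: "f = bin (mm w x) (mm y z) \<or> f = bin (mm y z) (mm w x)"
  shows "\<exists>F F'. ((F = mm w x \<and> F' = mm y z) \<or> (F = mm y z \<and> F' = mm w x)) \<and> LD r (f :: 'k::field mpoly) F F'"
proof -
  have "\<exists>m\<in>{w,x,y,z}. \<forall>u\<in>{w,x,y,z}. u \<noteq> m \<longrightarrow> (u, m) \<in> r"
    by (rule max_exists[OF _ _ inV slo]) auto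
  then obtain m where m: "m \<in> {w,x,y,z}" "\<forall>u\<in>{w,x,y,z}. u \<noteq> m \<longrightarrow> (u, m) \<in> r" by blast
  have ne: "mm w x \<noteq> mm y z" using mm_neq[OF dist] .
  show ?thesis
  proof (cases "m \<in> {w, x}")
    case True
    then have "lex_less r (mm y z) (mm w x) \<and> \<not> lex_less r (mm w x) (mm y z)"
      using lex_mm[OF slo rV dist inV True] m by blast
    then show ?thesis using LD_of_lex[OF ne, of r f] f by blast
  next
    case False
    then have m': "m \<in> {y, z}" using m by auto
    have d2: "distinct [y, z, w, x]" using dist by auto
    have "lex_less r (mm w x) (mm y z) \<and> \<not> lex_less r (mm y z) (mm w x)"
      using lex_mm[OF slo rV d2 _ m'] inV m by (auto simp: insert_commute)
    then show ?thesis using LD_of_lex[OF ne[symmetric], of r f] f by blast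
  qed
qed




lemma rtz_0: "reduces_to_zero r G 0" by (simp add: reduces_to_zero_def)

lemma rtz_step: "red_step r G p q \<Longrightarrow> reduces_to_zero r G q \<Longrightarrow> reduces_to_zero r G p"
  unfolding reduces_to_zero_def by (rule converse_rtranclp_into_rtranclp)

lemma mon_dvd_add: "mon_dvd F (F + X)" by (simp add: mon_dvd_def lookup_add)

lemma coprime_case:
  assumes "f \<in> Gs" "g \<in> Gs" "LD r f F F'" "LD r g G G'" "mon_lcm F G = F + G"
  shows "reduces_to_zero r Gs (spoly r f g :: 'k::field mpoly)"
proof -
  have sp: "spoly r f g = (bin (F + G') (G + F') :: 'k mpoly)"
    unfolding spoly_LD[OF assms(3,4)] assms(5) by (simp add: add.commute)
  show ?thesis
  proof (cases "F + G' = G + F'")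
    case True then show ?thesis using sp by (simp add: rtz_0)
  next
    case False
    have s1: "red_step r Gs (bin (F + G') (G + F') :: 'k mpoly) (bin (F + G' - F + F') (G + F'))"
      by (rule red1[OF assms(1,3) mon_dvd_add False])
    have e1: "F + G' - F + F' = G' + F'" by simp
    have GG: "G' \<noteq> G" using assms(4) by (auto simp: LD_def)
    then have ne: "G' + F' \<noteq> G + F'" by simp
    have s2: "red_step r Gs (bin (G' + F') (G + F') :: 'k mpoly) (bin (G' + F') (G + F' - G + G'))"
      by (rule red2[OF assms(2,4) mon_dvd_add ne])
    have e2: "G + F' - G + G' = G' + F'" by (simp add: add.commute)
    show ?thesis unfolding sp
      by (rule rtz_step[OF s1]) (unfold e1, rule rtz_step[OF s2], unfold e2 bin_self, rule rtz_0)
  qed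
qed

lemma shared_case:
  assumes "h \<in> Gs" "LD r h H H'" "spoly r f g = (bin M1 M2 :: 'k::field mpoly)"
    "(mon_dvd H M1 \<and> M1 - H + H' = M2) \<or> (mon_dvd H M2 \<and> M2 - H + H' = M1)"
  shows "reduces_to_zero r Gs (spoly r f g)"
proof (cases "M1 = M2")
  case True then show ?thesis using assms(3) by (simp add: rtz_0)
next
  case False
  have "reduces_to_zero r Gs (bin M1 M2 :: 'k mpoly)" using assms(4)
  proof
    assume a: "mon_dvd H M1 \<and> M1 - H + H' = M2"
    show ?thesis using red1[OF assms(1,2) _ False] a by (metis bin_self rtz_step rtz_0)
  next
    assume a: "mon_dvd H M2 \<and> M2 - H + H' = M1"
    show ?thesis using red2[OF assms(1,2) _ False] a by (metis bin_self rtz_step rtz_0)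
  qed
  then show ?thesis using assms(3) by simp
qed




lemma mon_eq_iff: "(A::monomial) = B \<longleftrightarrow> (\<forall>v. Poly_Mapping.lookup A v = Poly_Mapping.lookup B v)"
  by (auto intro: poly_mapping_eqI)

lemma mon_dvd_iff: "mon_dvd A B \<longleftrightarrow> (\<forall>v. Poly_Mapping.lookup A v \<le> Poly_Mapping.lookup B v)"
  by (auto simp: mon_dvd_def)

lemma all6: "P a \<Longrightarrow> P b \<Longrightarrow> P c \<Longrightarrow> P d \<Longrightarrow> P e \<Longrightarrow> P f' \<Longrightarrow>
   (\<And>v. v \<noteq> a \<Longrightarrow> v \<noteq> b \<Longrightarrow> v \<noteq> c \<Longrightarrow> v \<noteq> d \<Longrightarrow> v \<noteq> e \<Longrightarrow> v \<noteq> f' \<Longrightarrow> P v) \<Longrightarrow> \<forall>v. P v"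
  by metis

lemmas lsimps = lookup_add lookup_minus lookup_mm mon_lcm_def

lemma core:
  assumes slo: "strict_linear_order_on V r" and rV: "r \<subseteq> V \<times> V"
    and dist: "distinct [ps, qs, pt, qt, pu, qu]" and inV: "{ps, qs, pt, qt, pu, qu} \<subseteq> V"
    and mem: "f \<in> Gs" "g \<in> Gs" "h \<in> Gs"
    and bf: "f = bin (mm ps qt) (mm qs pt) \<or> f = bin (mm qs pt) (mm ps qt)"
    and bg: "g = bin (mm ps qu) (mm qs pu) \<or> g = bin (mm qs pu) (mm ps qu)"
    and bh: "h = bin (mm pt qu) (mm qt pu) \<or> h = bin (mm qt pu) (mm pt qu)"
  shows "reduces_to_zero r Gs (spoly r f g :: 'k::field mpoly)"
proof -
  obtain F F' where F: "(F = mm ps qt \<and> F' = mm qs pt) \<or> (F = mm qs pt \<and> F' = mm ps qt)" "LD r f F F'"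
    using lead_bo[OF slo rV _ _ bf] dist inV by auto
  obtain G G' where G: "(G = mm ps qu \<and> G' = mm qs pu) \<or> (G = mm qs pu \<and> G' = mm ps qu)" "LD r g G G'"
    using lead_bo[OF slo rV _ _ bg] dist inV by auto
  obtain H H' where H: "(H = mm pt qu \<and> H' = mm qt pu) \<or> (H = mm qt pu \<and> H' = mm pt qu)" "LD r h H H'"
    using lead_bo[OF slo rV _ _ bh] dist inV by auto
  have sp: "spoly r f g = bin (mon_lcm F G - G + G') (mon_lcm F G - F + F')"
    by (rule spoly_LD[OF F(2) G(2)])
  consider "F = mm ps qt" "F' = mm qs pt" "G = mm ps qu" "G' = mm qs pu"
    | "F = mm qs pt" "F' = mm ps qt" "G = mm qs pu" "G' = mm ps qu"
    | "F = mm ps qt" "F' = mm qs pt" "G = mm qs pu" "G' = mm ps qu"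
    | "F = mm qs pt" "F' = mm ps qt" "G = mm ps qu" "G' = mm qs pu"
    using F(1) G(1) by blast
  then show ?thesis
  proof cases
    case 1
    from H(1) show ?thesis
    proof (elim disjE conjE)
      assume h: "H = mm pt qu" "H' = mm qt pu"
      show ?thesis
        apply (rule shared_case[OF mem(3) H(2) sp])
        apply (rule disjI2) unfolding 1 h mon_eq_iff mon_dvd_iff
        apply (intro conjI all6[of _ ps qs pt qt pu qu])
        using dist by (auto simp add: lsimps)
    next
      assume h: "H = mm qt pu" "H' = mm pt qu"
      show ?thesis
        apply (rule shared_case[OF mem(3) H(2) sp])
        apply (rule disjI1) unfolding 1 h mon_eq_iff mon_dvd_iff
        apply (intro conjI all6[of _ ps qs pt qt pu qu])
        using dist by (auto simp add: lsimps)
    qed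
  next
    case 2
    from H(1) show ?thesis
    proof (elim disjE conjE)
      assume h: "H = mm pt qu" "H' = mm qt pu"
      show ?thesis
        apply (rule shared_case[OF mem(3) H(2) sp])
        apply (rule disjI1) unfolding 2 h mon_eq_iff mon_dvd_iff
        apply (intro conjI all6[of _ ps qs pt qt pu qu])
        using dist by (auto simp add: lsimps)
    next
      assume h: "H = mm qt pu" "H' = mm pt qu"
      show ?thesis
        apply (rule shared_case[OF mem(3) H(2) sp])
        apply (rule disjI2) unfolding 2 h mon_eq_iff mon_dvd_iff
        apply (intro conjI all6[of _ ps qs pt qt pu qu])
        using dist by (auto simp add: lsimps)
    qed
  next
    case 3
    show ?thesis
      apply (rule coprime_case[OF mem(1,2) F(2) G(2)])
      unfolding 3 mon_eq_iff
      apply (intro conjI all6[of _ ps qs pt qt pu qu])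
      using dist by (auto simp: lsimps)
  next
    case 4
    show ?thesis
      apply (rule coprime_case[OF mem(1,2) F(2) G(2)])
      unfolding 4 mon_eq_iff
      apply (intro conjI all6[of _ ps qs pt qt pu qu])
      using dist by (auto simp: lsimps)
  qed
qed




definition cb :: "(int \<Rightarrow> point) \<Rightarrow> (int \<Rightarrow> point) \<Rightarrow> int \<Rightarrow> int \<Rightarrow> 'k::field mpoly \<Rightarrow> bool" where
  "cb p q x y f \<longleftrightarrow> f = bin (mm (p x) (q y)) (mm (q x) (p y)) \<or> f = bin (mm (q x) (p y)) (mm (p x) (q y))"

lemma mm_comm: "mm x y = mm y x" by (simp add: mm_def add.commute)

lemma cb_sym: "cb p q x y f \<Longrightarrow> cb p q y x f"
  unfolding cb_def by (metis mm_comm)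

lemma inner_minor_eq: "inner_minor (x1, y1) (x2, y2) = bin (mm (x1, y1) (x2, y2)) (mm (x1, y2) (x2, y1))"
  by (simp add: inner_minor_def var_def ul_corner_def lr_corner_def bin_def mm_def mult_single)

lemma cbA: "cb (\<lambda>y. (x1, y)) (\<lambda>y. (x2, y)) y1 y2 (inner_minor (x1, y1) (x2, y2))"
  unfolding cb_def inner_minor_eq by (metis mm_comm)

lemma cbB: "cb (\<lambda>x. (x, y1)) (\<lambda>x. (x, y2)) x1 x2 (inner_minor (x1, y1) (x2, y2))"
  unfolding cb_def inner_minor_eq by (metis mm_comm)

lemma corners_in_V:
  assumes "inner_interval P (x1, y1) (x2, y2)"
  shows "(x1, y1) \<in> vertex_set P" "(x2, y2) \<in> vertex_set P" "(x1, y2) \<in> vertex_set P" "(x2, y1) \<in> vertex_set P"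
proof -
  have lt: "x1 < x2" "y1 < y2" using assms by (auto simp: inner_interval_def)
  have inP: "v \<in> P" if "x1 \<le> fst v" "fst v + 1 \<le> x2" "y1 \<le> snd v" "snd v + 1 \<le> y2" for v
    using assms that by (cases v) (auto simp: inner_interval_def)
  have c1: "(x1, y1) \<in> P" "(x2 - 1, y2 - 1) \<in> P" "(x1, y2 - 1) \<in> P" "(x2 - 1, y1) \<in> P"
    using lt by (auto intro!: inP)
  show "(x1, y1) \<in> vertex_set P" using c1(1) unfolding vertex_set_def cell_vertices_def by force
  show "(x2, y2) \<in> vertex_set P" using c1(2) unfolding vertex_set_def cell_vertices_def
    by (auto intro!: bexI[of _ "(x2 - 1, y2 - 1)"])
  show "(x1, y2) \<in> vertex_set P" using c1(3) unfolding vertex_set_def cell_vertices_def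
    by (auto intro!: bexI[of _ "(x1, y2 - 1)"])
  show "(x2, y1) \<in> vertex_set P" using c1(4) unfolding vertex_set_def cell_vertices_def
    by (auto intro!: bexI[of _ "(x2 - 1, y1)"])
qed

lemma via_cols:
  assumes slo: "strict_linear_order_on V r" and rV: "r \<subseteq> V \<times> V"
    and dist: "distinct [p s, q s, p t, q t, p u, q u]" and inV: "{p s, q s, p t, q t, p u, q u} \<subseteq> V"
    and mem: "f \<in> Gs" "g \<in> Gs" "h \<in> Gs"
    and c: "cb p q s t f" "cb p q s u g" "cb p q t u h"
  shows "reduces_to_zero r Gs (spoly r f g :: 'k::field mpoly)"
  by (rule core[OF slo rV dist inV mem]) (use c in \<open>auto simp: cb_def\<close>)

lemma cover:
  fixes j l j' l' s v :: int
  assumes "j < l" "j' < l'" "{j, l} \<inter> {j', l'} = {s}"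
    "t \<in> {j, l}" "t \<noteq> s" "u \<in> {j', l'}" "u \<noteq> s" "min t u \<le> v" "v + 1 \<le> max t u"
  shows "(j \<le> v \<and> v + 1 \<le> l) \<or> (j' \<le> v \<and> v + 1 \<le> l')"
proof -
  have "s \<in> {j, l}" "s \<in> {j', l'}" using assms(3) by auto
  then have st: "(s = j \<and> t = l) \<or> (s = l \<and> t = j)" and su: "(s = j' \<and> u = l') \<or> (s = l' \<and> u = j')"
    using assms(4-7) by auto
  have mm: "min t u \<le> v" "v + 1 \<le> max t u" by fact+
  show ?thesis using st su mm assms(1,2) unfolding min_def max_def
    by (elim disjE conjE) (simp_all split: if_splits; linarith)+
qed




lemma inner_minors_mem: "inner_interval P a b \<Longrightarrow> inner_minor a b \<in> inner_minors P"
  unfolding inner_minors_def by blast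

lemma caseA:
  assumes slo: "strict_linear_order_on (vertex_set P) r" and rV: "r \<subseteq> vertex_set P \<times> vertex_set P"
    and I1: "inner_interval P (i, j) (k, l)" and I2: "inner_interval P (i, j') (k, l')"
    and Y: "{j, l} \<inter> {j', l'} = {s}"
  shows "reduces_to_zero r (inner_minors P :: 'k::field mpoly set)
           (spoly r (inner_minor (i, j) (k, l)) (inner_minor (i, j') (k, l')))"
proof -
  define p where "p = (\<lambda>y::int. (i, y))"
  define q where "q = (\<lambda>y::int. (k, y))"
  define t where "t = (if s = j then l else j)"
  define u where "u = (if s = j' then l' else j')"
  have lt: "i < k" "j < l" "j' < l'" using I1 I2 by (auto simp: inner_interval_def)
  have s: "s \<in> {j, l}" "s \<in> {j', l'}" using Y by auto
  have t: "t \<in> {j, l}" "t \<noteq> s" using s lt by (auto simp: t_def)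
  have u: "u \<in> {j', l'}" "u \<noteq> s" using s lt by (auto simp: u_def)
  have tu: "t \<noteq> u" using t u Y by auto
  have cf: "cb p q s t (inner_minor (i, j) (k, l) :: 'k mpoly)"
    using cbA[of i k j l] s(1) lt unfolding p_def q_def t_def by (auto intro: cb_sym)
  have cg: "cb p q s u (inner_minor (i, j') (k, l') :: 'k mpoly)"
    using cbA[of i k j' l'] s(2) lt unfolding p_def q_def u_def by (auto intro: cb_sym)
  define h :: "'k mpoly" where "h = inner_minor (i, min t u) (k, max t u)"
  have ch: "cb p q t u h"
    using cbA[of i k "min t u" "max t u"] unfolding p_def q_def h_def
    by (cases "t \<le> u") (auto simp: min_def max_def intro: cb_sym)
  have Ih: "inner_interval P (i, min t u) (k, max t u)"
    unfolding inner_interval_def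
  proof (intro conjI allI impI)
    show "fst (i, min t u) < fst (k, max t u)" using lt by simp
    show "snd (i, min t u) < snd (k, max t u)" using tu by (simp add: min_def max_def)
  next
    fix v :: point
    assume a: "fst (i, min t u) \<le> fst v \<and> fst v + 1 \<le> fst (k, max t u) \<and>
               snd (i, min t u) \<le> snd v \<and> snd v + 1 \<le> snd (k, max t u)"
    have "(j \<le> snd v \<and> snd v + 1 \<le> l) \<or> (j' \<le> snd v \<and> snd v + 1 \<le> l')"
      by (rule cover[OF lt(2,3) Y t u]) (use a in auto)
    then show "v \<in> P" using I1 I2 a unfolding inner_interval_def by (cases v) auto
  qed
  have V: "{p s, q s, p t, q t, p u, q u} \<subseteq> vertex_set P"
    using corners_in_V[OF I1] corners_in_V[OF I2] s t u unfolding p_def q_def by auto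
  have dist: "distinct [p s, q s, p t, q t, p u, q u]"
    using lt(1) t u tu unfolding p_def q_def by auto
  have hm: "h \<in> inner_minors P" unfolding h_def by (rule inner_minors_mem[OF Ih])
  show ?thesis
    by (rule via_cols[OF slo rV dist V inner_minors_mem[OF I1] inner_minors_mem[OF I2] hm cf cg ch])
qed

lemma caseB:
  assumes slo: "strict_linear_order_on (vertex_set P) r" and rV: "r \<subseteq> vertex_set P \<times> vertex_set P"
    and I1: "inner_interval P (i, j) (k, l)" and I2: "inner_interval P (i', j) (k', l)"
    and X: "{i, k} \<inter> {i', k'} = {s}"
  shows "reduces_to_zero r (inner_minors P :: 'k::field mpoly set)
           (spoly r (inner_minor (i, j) (k, l)) (inner_minor (i', j) (k', l)))"
proof -
  define p where "p = (\<lambda>x::int. (x, j))"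
  define q where "q = (\<lambda>x::int. (x, l))"
  define t where "t = (if s = i then k else i)"
  define u where "u = (if s = i' then k' else i')"
  have lt: "j < l" "i < k" "i' < k'" using I1 I2 by (auto simp: inner_interval_def)
  have s: "s \<in> {i, k}" "s \<in> {i', k'}" using X by auto
  have t: "t \<in> {i, k}" "t \<noteq> s" using s lt by (auto simp: t_def)
  have u: "u \<in> {i', k'}" "u \<noteq> s" using s lt by (auto simp: u_def)
  have tu: "t \<noteq> u" using t u X by auto
  have cf: "cb p q s t (inner_minor (i, j) (k, l) :: 'k mpoly)"
    using cbB[of j l i k] s(1) lt unfolding p_def q_def t_def by (auto intro: cb_sym)
  have cg: "cb p q s u (inner_minor (i', j) (k', l) :: 'k mpoly)"
    using cbB[of j l i' k'] s(2) lt unfolding p_def q_def u_def by (auto intro: cb_sym)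
  define h :: "'k mpoly" where "h = inner_minor (min t u, j) (max t u, l)"
  have ch: "cb p q t u h"
    using cbB[of j l "min t u" "max t u"] unfolding p_def q_def h_def
    by (cases "t \<le> u") (auto simp: min_def max_def intro: cb_sym)
  have Ih: "inner_interval P (min t u, j) (max t u, l)"
    unfolding inner_interval_def
  proof (intro conjI allI impI)
    show "snd (min t u, j) < snd (max t u, l)" using lt by simp
    show "fst (min t u, j) < fst (max t u, l)" using tu by (simp add: min_def max_def)
  next
    fix v :: point
    assume a: "fst (min t u, j) \<le> fst v \<and> fst v + 1 \<le> fst (max t u, l) \<and>
               snd (min t u, j) \<le> snd v \<and> snd v + 1 \<le> snd (max t u, l)"
    have "(i \<le> fst v \<and> fst v + 1 \<le> k) \<or> (i' \<le> fst v \<and> fst v + 1 \<le> k')"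
      by (rule cover[OF lt(2,3) X t u]) (use a in auto)
    then show "v \<in> P" using I1 I2 a unfolding inner_interval_def by (cases v) auto
  qed
  have V: "{p s, q s, p t, q t, p u, q u} \<subseteq> vertex_set P"
    using corners_in_V[OF I1] corners_in_V[OF I2] s t u unfolding p_def q_def by auto
  have dist: "distinct [p s, q s, p t, q t, p u, q u]"
    using lt(1) t u tu unfolding p_def q_def by auto
  have hm: "h \<in> inner_minors P" unfolding h_def by (rule inner_minors_mem[OF Ih])
  show ?thesis
    by (rule via_cols[OF slo rV dist V inner_minors_mem[OF I1] inner_minors_mem[OF I2] hm cf cg ch])
qed





lemma prod2:
  fixes x y :: nat
  assumes "x \<le> 2" "y \<le> 2" "x * y = 2"
  shows "(x = 2 \<and> y = 1) \<or> (x = 1 \<and> y = 2)"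
proof -
  have "x = 0 \<or> x = 1 \<or> x = 2" "y = 0 \<or> y = 1 \<or> y = 2" using assms(1,2) by auto
  then show ?thesis using assms(3) by auto
qed
lemma pair_eq2:
  fixes i k i' k' :: int
  assumes "i < k" "i' < k'" "card ({i, k} \<inter> {i', k'}) = 2"
  shows "i = i' \<and> k = k'"
proof -
  have "{i, k} \<inter> {i', k'} = {i, k}"
    using card_subset_eq[of "{i,k}" "{i, k} \<inter> {i', k'}"] assms by auto
  then have "i \<in> {i', k'}" "k \<in> {i', k'}" by auto
  then show ?thesis using assms(1,2) by auto
qed

lemma card_le2: "card ({i, k} \<inter> {i', k'::int}) \<le> 2"
  by (rule order_trans[OF card_mono[of "{i,k}"]]) (auto simp: card_insert_le_m1)

theorem mainTheorem1:
  fixes P :: "point set" and a b \<alpha> \<beta> :: point and r :: "point rel"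
  assumes "is_collection_of_cells P"
    and "inner_interval P a b" and "inner_interval P \<alpha> \<beta>"
    and "card ({a, b, ul_corner a b, lr_corner a b} \<inter>
               {\<alpha>, \<beta>, ul_corner \<alpha> \<beta>, lr_corner \<alpha> \<beta>}) = 2"
    and "strict_linear_order_on (vertex_set P) r" and "r \<subseteq> vertex_set P \<times> vertex_set P"
  shows "reduces_to_zero r (inner_minors P :: 'k::field mpoly set)
           (spoly r (inner_minor a b) (inner_minor \<alpha> \<beta>))"
proof -
  obtain i j where a: "a = (i, j)" by (cases a)
  obtain k l where b: "b = (k, l)" by (cases b)
  obtain i' j' where al: "\<alpha> = (i', j')" by (cases \<alpha>)
  obtain k' l' where be: "\<beta> = (k', l')" by (cases \<beta>)
  have I1: "inner_interval P (i, j) (k, l)" using assms(2) a b by simp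
  have I2: "inner_interval P (i', j') (k', l')" using assms(3) al be by simp
  have lt: "i < k" "j < l" "i' < k'" "j' < l'" using I1 I2 by (auto simp: inner_interval_def)
  have e1: "{a, b, ul_corner a b, lr_corner a b} = {i, k} \<times> {j, l}"
    unfolding a b ul_corner_def lr_corner_def fst_conv snd_conv by blast
  have e2: "{\<alpha>, \<beta>, ul_corner \<alpha> \<beta>, lr_corner \<alpha> \<beta>} = {i', k'} \<times> {j', l'}"
    unfolding al be ul_corner_def lr_corner_def fst_conv snd_conv by blast
  have "card (({i, k} \<inter> {i', k'}) \<times> ({j, l} \<inter> {j', l'})) = 2"
    using assms(4) unfolding e1 e2 Times_Int_Times .
  then have prod: "card ({i, k} \<inter> {i', k'}) * card ({j, l} \<inter> {j', l'}) = 2"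
    by (simp only: card_cartesian_product)
  have le: "card ({i, k} \<inter> {i', k'}) \<le> 2" "card ({j, l} \<inter> {j', l'}) \<le> 2" by (rule card_le2)+
  have "(card ({i, k} \<inter> {i', k'}) = 2 \<and> card ({j, l} \<inter> {j', l'}) = 1) \<or>
        (card ({i, k} \<inter> {i', k'}) = 1 \<and> card ({j, l} \<inter> {j', l'}) = 2)"
    by (rule prod2[OF le prod])
  then show ?thesis
  proof
    assume c: "card ({i, k} \<inter> {i', k'}) = 2 \<and> card ({j, l} \<inter> {j', l'}) = 1"
    have ik: "i = i'" "k = k'" using pair_eq2[OF lt(1,3) conjunct1[OF c]] by simp_all
    obtain s where "{j, l} \<inter> {j', l'} = {s}" using conjunct2[OF c] by (rule card_1_singletonE)
    then show ?thesis
      using caseA[OF assms(5,6) I1 I2[folded ik]] unfolding a b al be ik[symmetric] by blast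
  next
    assume c: "card ({i, k} \<inter> {i', k'}) = 1 \<and> card ({j, l} \<inter> {j', l'}) = 2"
    have jl: "j = j'" "l = l'" using pair_eq2[OF lt(2,4) conjunct2[OF c]] by simp_all
    obtain s where "{i, k} \<inter> {i', k'} = {s}" using conjunct1[OF c] by (rule card_1_singletonE)
    then show ?thesis
      using caseB[OF assms(5,6) I1 I2[folded jl]] unfolding a b al be jl[symmetric] by blast
  qed
qed


end
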